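(* Let $\mathcal{G}$ (the Galilei group) be the group of transformations of $\mathbb{R}^4=\mathbb{R}^3\times\mathbb{R}$ of the form $x\mapsto \begin{pmatrix} S & w\\ 0^T & 1\end{pmatrix}x+b$ with $S\in SO(3)$, $w\in\mathbb{R}^3$, $b\in\mathbb{R}^4$. Then the nontrivial $\mathcal{G}$-invariant equivalence relations on $\mathbb{R}^4$ are exactly the relations $\sim_H$, where $H$ ranges over the proper additive subgroups of $\mathbb{R}$, whose equivalence classes are $[x]_H=x+(\mathbb{R}^3\times H)$.
   Context: An equivalence relation $\sim$ on $\mathbb{R}^4$ is $\mathcal{G}$-invariant if $x\sim y$ implies $g(x)\sim g(y)$ for all $x,y$ and $g\in\mathcal{G}$. It is trivial if it is the total relation $\mathbb{R}^4\times\mathbb{R}^4$ or the identity relation (diagonal). *)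

theory Defs
  imports "HOL-Analysis.Analysis"
begin

definition SO3 :: "(real^3^3) set" where
  "SO3 = {S. orthogonal_matrix S \<and> det S = 1}"

text \<open>The affine map x |-> [[S, w],[0^T, 1]] x + b, written blockwise.\<close>
definition galilei_map :: "real^3^3 \<Rightarrow> real^3 \<Rightarrow> ((real^3) \<times> real) \<Rightarrow> ((real^3) \<times> real) \<Rightarrow> ((real^3) \<times> real)" where
  "galilei_map S w b x = (S *v fst x + snd x *\<^sub>R w, snd x) + b"

definition galilei_group :: "(((real^3) \<times> real) \<Rightarrow> ((real^3) \<times> real)) set" where
  "galilei_group = {galilei_map S w b | S w b. S \<in> SO3}"

definition invariant_rel :: "('a \<Rightarrow> 'a) set \<Rightarrow> ('a \<times> 'a) set \<Rightarrow> bool" where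
  "invariant_rel G r \<longleftrightarrow> (\<forall>x y g. (x, y) \<in> r \<longrightarrow> g \<in> G \<longrightarrow> (g x, g y) \<in> r)"

definition trivial_rel :: "('a \<times> 'a) set \<Rightarrow> bool" where
  "trivial_rel r \<longleftrightarrow> r = UNIV \<or> r = Id"

definition additive_subgroup :: "real set \<Rightarrow> bool" where
  "additive_subgroup H \<longleftrightarrow> 0 \<in> H \<and> (\<forall>a\<in>H. \<forall>b\<in>H. a + b \<in> H) \<and> (\<forall>a\<in>H. - a \<in> H)"

definition rel_H :: "real set \<Rightarrow> (((real^3) \<times> real) \<times> ((real^3) \<times> real)) set" where
  "rel_H H = {(x, y). y \<in> (\<lambda>h. x + h) ` (UNIV \<times> H)}"

end

theory Submission
  imports Defs
begin

lemma rel_H_iff: "(x, y) \<in> rel_H H \<longleftrightarrow> snd y - snd x \<in> H"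
proof
  assume "(x, y) \<in> rel_H H"
  then obtain h where "h \<in> UNIV \<times> H" "y = x + h" unfolding rel_H_def by auto
  then show "snd y - snd x \<in> H" by (cases h) auto
next
  assume a: "snd y - snd x \<in> H"
  have "y = x + (y - x)" by simp
  moreover have "y - x \<in> UNIV \<times> H" using a by (cases x, cases y) auto
  ultimately have "y \<in> (\<lambda>h. x + h) ` (UNIV \<times> H)" by (rule image_eqI)
  then show "(x, y) \<in> rel_H H" unfolding rel_H_def by simp
qed

lemma rot:
  fixes a b :: "real^3"
  assumes "norm a = norm b"
  shows "\<exists>S\<in>SO3. S *v a = b"
proof -
  have c: "2 \<le> CARD(3)" by simp
  obtain f where f: "orthogonal_transformation f" "det (matrix f) = 1" "f a = b"
    using rotation_exists[OF c assms] by metis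
  have lf: "linear f" using f(1) orthogonal_transformation by blast
  have "matrix f *v a = f a" using lf by (simp add: matrix_works)
  moreover have "matrix f \<in> SO3"
    using f orthogonal_transformation_matrix unfolding SO3_def by blast
  ultimately show ?thesis using f(3) by metis
qed

lemma id_SO3: "mat 1 \<in> SO3"
  unfolding SO3_def by (simp add: orthogonal_matrix_id det_I)

lemma transl_in: "galilei_map (mat 1) 0 b \<in> galilei_group"
  unfolding galilei_group_def using id_SO3 by blast

lemma transl_eq: "galilei_map (mat 1) 0 b x = x + b"
  unfolding galilei_map_def by simp

lemma map_in: "S \<in> SO3 \<Longrightarrow> galilei_map S w b \<in> galilei_group"
  unfolding galilei_group_def by blast


lemma backward:
  assumes H: "additive_subgroup H" "H \<noteq> UNIV"
  shows "equiv UNIV (rel_H H) \<and> invariant_rel galilei_group (rel_H H) \<and> \<not> trivial_rel (rel_H H)"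
proof (intro conjI)
  have h0: "0 \<in> H" and hadd: "\<And>a b. a \<in> H \<Longrightarrow> b \<in> H \<Longrightarrow> a + b \<in> H"
    and hneg: "\<And>a. a \<in> H \<Longrightarrow> - a \<in> H" using H(1) unfolding additive_subgroup_def by auto
  show "equiv UNIV (rel_H H)"
  proof (rule equivI)
    show "refl (rel_H H)" unfolding refl_on_def using h0 by (auto simp: rel_H_iff)
    show "sym (rel_H H)" unfolding sym_def
    proof (intro allI impI)
      fix x y assume "(x, y) \<in> rel_H H"
      then have "- (snd y - snd x) \<in> H" using hneg by (simp only: rel_H_iff)
      then show "(y, x) \<in> rel_H H" by (simp add: rel_H_iff)
    qed
    show "trans (rel_H H)" unfolding trans_def
    proof (intro allI impI)
      fix x y z assume "(x, y) \<in> rel_H H" "(y, z) \<in> rel_H H"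
      then have "(snd y - snd x) + (snd z - snd y) \<in> H" using hadd by (simp only: rel_H_iff)
      then show "(x, z) \<in> rel_H H" by (simp add: rel_H_iff)
    qed
    show "rel_H H \<subseteq> UNIV \<times> UNIV" by simp
  qed
  show "invariant_rel galilei_group (rel_H H)"
    unfolding invariant_rel_def galilei_group_def
    by (auto simp: rel_H_iff galilei_map_def)
  show "\<not> trivial_rel (rel_H H)"
  proof
    assume "trivial_rel (rel_H H)"
    then consider "rel_H H = UNIV" | "rel_H H = Id" unfolding trivial_rel_def by blast
    then show False
    proof cases
      case 1
      obtain t where t: "t \<notin> H" using H(2) by blast
      have "((0, 0), (0, t)) \<in> rel_H H" using 1 by simp
      then show False using t by (simp add: rel_H_iff)
    next
      case 2
      have "((0, 0), (1, 0)) \<in> rel_H H" using h0 by (simp add: rel_H_iff)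
      then show False using 2 by simp
    qed
  qed
qed

lemma forward:
  fixes r :: "(((real^3) \<times> real) \<times> ((real^3) \<times> real)) set"
  assumes E: "equiv UNIV r" and I: "invariant_rel galilei_group r" and N: "\<not> trivial_rel r"
  shows "\<exists>H. additive_subgroup H \<and> H \<noteq> UNIV \<and> r = rel_H H"
proof -
  have refl: "\<And>x. (x, x) \<in> r" using E by (metis equiv_def iso_tuple_UNIV_I refl_onD)
  have sym: "\<And>x y. (x, y) \<in> r \<Longrightarrow> (y, x) \<in> r" using E by (meson equivE symD)
  have trn: "\<And>x y z. (x, y) \<in> r \<Longrightarrow> (y, z) \<in> r \<Longrightarrow> (x, z) \<in> r" using E by (meson equivE transD)
  have gI: "\<And>x y g. (x, y) \<in> r \<Longrightarrow> g \<in> galilei_group \<Longrightarrow> (g x, g y) \<in> r"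
    using I unfolding invariant_rel_def by blast
  have tr: "\<And>x y b. (x, y) \<in> r \<Longrightarrow> (x + b, y + b) \<in> r"
    using gI[OF _ transl_in] by (simp add: transl_eq)
  have T: "\<And>x y. (x, y) \<in> r \<longleftrightarrow> (0, y - x) \<in> r"
  proof
    fix x y assume "(x, y) \<in> r"
    from tr[OF this, of "- x"] show "(0, y - x) \<in> r" by simp
  next
    fix x y assume "(0, y - x) \<in> r"
    from tr[OF this, of x] show "(x, y) \<in> r" by simp
  qed
  define K where "K v \<longleftrightarrow> (0, v) \<in> r" for v
  have K0: "K 0" unfolding K_def using refl by simp
  have Kadd: "K (a + b)" if "K a" "K b" for a b
  proof -
    have "(a, b + a) \<in> r" using tr[of 0 b a] that(2) unfolding K_def by simp
    then have "(0, b + a) \<in> r" using trn that(1) unfolding K_def by blast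
    then show ?thesis unfolding K_def by (simp add: add.commute)
  qed
  have Kneg: "K (- a)" if "K a" for a
  proof -
    have "(- a, 0) \<in> r" using tr[of 0 a "- a"] that unfolding K_def by simp
    then show ?thesis using sym unfolding K_def by blast
  qed
  have Kmult: "K (of_nat n *\<^sub>R a)" if "K a" for a n
  proof (induction n)
    case 0 then show ?case using K0 by simp
  next
    case (Suc n)
    then have "K (of_nat n *\<^sub>R a + a)" using Kadd that by blast
    then show ?case by (simp add: algebra_simps)
  qed
  have lin: "K (S *v u + t *\<^sub>R w, t)" if "S \<in> SO3" "K (u, t)" for S u t w
  proof -
    have "(galilei_map S w 0 0, galilei_map S w 0 (u, t)) \<in> r"
      using gI[OF _ map_in[OF that(1)]] that(2) unfolding K_def by blast
    then show ?thesis unfolding K_def galilei_map_def by (simp add: zero_prod_def)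
  qed
  have sprot: "K (u', 0)" if h1: "K (u, 0)" and h2: "norm u' = norm u" for u u'
  proof -
    obtain S where "S \<in> SO3" "S *v u = u'" using rot[of u u'] h2 by metis
    then show ?thesis using lin[of S u 0 0] h1 by simp
  qed
  have spall: "K (z, 0)" if Ku: "K (u, 0)" and u0: "u \<noteq> 0" for u z
  proof -
    define \<rho> where "\<rho> = norm u"
    have \<rho>: "\<rho> > 0" using u0 by (simp add: \<rho>_def)
    have small: "K (y, 0)" if ny: "norm y \<le> 2 * \<rho>" for y
    proof -
      have d3: "2 \<le> DIM(real^3)" by simp
      obtain c where c: "c \<noteq> 0" "orthogonal y c" using orthogonal_to_vector_exists[OF d3] by blast
      define s where "s = sqrt (\<rho>^2 - (norm y / 2)^2)"
      define d where "d = (s / norm c) *\<^sub>R c"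
      have nd: "norm d = \<bar>s\<bar>" unfolding d_def s_def using c(1) by simp
      have s2: "s^2 = \<rho>^2 - (norm y / 2)^2" unfolding s_def
      proof (rule real_sqrt_pow2)
        have "norm y / 2 \<le> \<rho>" using ny by simp
        moreover have "0 \<le> norm y / 2" by simp
        ultimately have "(norm y / 2)^2 \<le> \<rho>^2" by (rule power_mono)
        then show "0 \<le> \<rho>^2 - (norm y / 2)^2" by simp
      qed
      have od: "orthogonal ((1/2) *\<^sub>R y) d" "orthogonal (- ((1/2) *\<^sub>R y)) d"
        using c(2) unfolding d_def orthogonal_def by (auto simp: inner_commute)
      have na: "norm ((1/2) *\<^sub>R y + d) = norm u"
      proof -
        have "norm ((1/2) *\<^sub>R y + d)^2 = (norm y / 2)^2 + s^2"
          using norm_add_Pythagorean[OF od(1)] nd by simp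
        also have "\<dots> = \<rho>^2" using s2 by simp
        finally show ?thesis unfolding \<rho>_def by (simp add: power2_eq_iff_nonneg)
      qed
      have nb: "norm (- ((1/2) *\<^sub>R y) + d) = norm u"
      proof -
        have "norm (- ((1/2) *\<^sub>R y) + d)^2 = (norm y / 2)^2 + s^2"
          using norm_add_Pythagorean[OF od(2)] nd by simp
        also have "\<dots> = \<rho>^2" using s2 by simp
        finally show ?thesis unfolding \<rho>_def by (simp add: power2_eq_iff_nonneg)
      qed
      have "K ((1/2) *\<^sub>R y + d, 0)" using sprot[OF Ku na] .
      moreover have "K (- (- ((1/2) *\<^sub>R y) + d, 0))" using Kneg[OF sprot[OF Ku nb]] .
      ultimately have "K (((1/2) *\<^sub>R y + d, 0) + (- (- ((1/2) *\<^sub>R y) + d, 0)))" by (rule Kadd)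
      moreover have "((1/2) *\<^sub>R y + d, 0) + (- (- ((1/2) *\<^sub>R y) + d, 0)) = (y, (0::real))"
        by (simp add: algebra_simps scaleR_2[symmetric])
      ultimately show ?thesis by simp
    qed
    obtain n :: nat where n: "norm z / (2 * \<rho>) < real n" using reals_Archimedean2 by blast
    have npos: "real n > 0" using n \<rho> by (smt (verit) divide_nonneg_pos norm_ge_zero)
    define y where "y = (1 / real n) *\<^sub>R z"
    have "norm y = norm z / real n" unfolding y_def using npos by simp
    also have "\<dots> \<le> 2 * \<rho>" using n npos \<rho> by (simp add: field_simps)
    finally have "K (y, 0)" by (rule small)
    then have "K (of_nat n *\<^sub>R (y, 0))" by (rule Kmult)
    moreover have "of_nat n *\<^sub>R (y, (0::real)) = (z, 0)" unfolding y_def using npos by simp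
    ultimately show ?thesis by simp
  qed
  have notId: "r \<noteq> Id" and notU: "r \<noteq> UNIV" using N unfolding trivial_rel_def by auto
  obtain x y where xy: "(x, y) \<in> r" "x \<noteq> y" using notId refl by auto
  obtain u t where ut: "y - x = (u, t)" by (cases "y - x")
  have Kut: "K (u, t)" using xy(1) T ut unfolding K_def by metis
  have allsp: "K (z, 0)" for z
  proof (cases "t = 0")
    case True
    have "y - x \<noteq> 0" using xy(2) by simp
    then have "u \<noteq> 0" using ut True by (simp add: zero_prod_def)
    then show ?thesis using spall Kut True by blast
  next
    case False
    have "K (mat 1 *v u + t *\<^sub>R ((1/t) *\<^sub>R z), t)" using lin[OF id_SO3 Kut] .
    then have a: "K (u + z, t)" using False by simp
    have "K ((u + z, t) + - (u, t))" by (rule Kadd[OF a Kneg[OF Kut]])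
    then show ?thesis by simp
  qed
  have dec: "K (a, b) \<longleftrightarrow> K (0, b)" for a b
  proof
    assume "K (a, b)"
    then have "K ((a, b) + (- a, 0))" using Kadd allsp by blast
    then show "K (0, b)" by simp
  next
    assume "K (0, b)"
    then have "K ((0, b) + (a, 0))" using Kadd allsp by blast
    then show "K (a, b)" by simp
  qed
  define H where "H = {t. K (0, t)}"
  have sub: "additive_subgroup H" unfolding additive_subgroup_def H_def
  proof (intro conjI ballI)
    show "0 \<in> {t. K (0, t)}" using K0 by (simp add: zero_prod_def)
  next
    fix a b assume "a \<in> {t. K (0, t)}" "b \<in> {t. K (0, t)}"
    then have "K ((0, a) + (0, b))" by (intro Kadd) simp_all
    then show "a + b \<in> {t. K (0, t)}" by simp
  next
    fix a assume "a \<in> {t. K (0, t)}"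
    then have "K (- (0, a))" by (intro Kneg) simp
    then show "- a \<in> {t. K (0, t)}" by simp
  qed
  have req: "(p, q) \<in> r \<longleftrightarrow> (p, q) \<in> rel_H H" for p q
  proof -
    have "(p, q) \<in> r \<longleftrightarrow> K (fst (q - p), snd (q - p))" unfolding K_def T[of p q] by (metis fst_diff snd_diff prod.collapse)
    also have "\<dots> \<longleftrightarrow> K (0, snd q - snd p)" using dec by simp
    also have "\<dots> \<longleftrightarrow> (p, q) \<in> rel_H H" by (simp add: rel_H_iff H_def)
    finally show ?thesis .
  qed
  then have rH: "r = rel_H H" by auto
  have "H \<noteq> UNIV"
  proof
    assume "H = UNIV"
    then have "r = UNIV" using rH by (auto simp: rel_H_iff)
    then show False using notU by simp
  qed
  then show ?thesis using sub rH by blast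
qed

theorem theorem3p6:
  fixes r :: "(((real^3) \<times> real) \<times> ((real^3) \<times> real)) set"
  shows "(equiv UNIV r \<and> invariant_rel galilei_group r \<and> \<not> trivial_rel r) \<longleftrightarrow>
         (\<exists>H. additive_subgroup H \<and> H \<noteq> UNIV \<and> r = rel_H H)"
  using forward backward by blast

end
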